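(* There exists a constant $B_3>0$ depending only on $d$ such that for all $p\in(1,\infty)$, $\alpha\in(0,d/p)$ and $q\in[p,\infty)$ with $\frac1q=\frac1p-\frac\alpha d$, \[ \frac{1}{B_3}S(p,q)\le\widetilde E_H(p,q,d)\le B_3\,S(p,q), \qquad\text{where } S(p,q)=\min\Big(\frac{q^{1/p'}}{p-1},\frac{{p'}^{1/q}}{q'-1}\Big). \]
   Context: Here $d\in\mathbb{N}^*$, $p'=p/(p-1)$, $q'=q/(q-1)$, $\omega_{d-1}$ is the surface measure of the unit sphere in $\mathbb{R}^d$, and \[ \widetilde E_H(p,q,d)=\frac{1}{(2\pi)^\alpha}\frac{\Gamma((d-\alpha)/2)}{\Gamma(\alpha/2)}\frac d\alpha\Big(\frac{\omega_{d-1}}{d}\Big)^{1-\frac\alpha d}\Big(1-\frac\alpha d\Big)^{1-\frac\alpha d}\frac{1}{pq'}\Big({p'}^{\frac1{p'}+\frac1q}+q^{\frac1{p'}+\frac1q}\Big). \] (This is Lieb's upper bound for the best constant of the homogeneous Sobolev embedding $\|\Delta^{-\alpha/2}f\|_{L^q(\mathbb{R}^d)}\le C\|f\|_{L^p(\mathbb{R}^d)}$.) *)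

theory Defs
  imports "HOL-Analysis.Analysis"
begin

definition sphere_area :: "nat \<Rightarrow> real" where
  "sphere_area d = 2 * pi powr (real d / 2) / Gamma (real d / 2)"

definition conj_exp :: "real \<Rightarrow> real" where
  "conj_exp p = p / (p - 1)"

text \<open>Lieb's upper bound; alpha is determined by 1/q = 1/p - alpha/d.\<close>
definition E_H_tilde :: "real \<Rightarrow> real \<Rightarrow> nat \<Rightarrow> real" where
  "E_H_tilde p q d =
    (let \<alpha> = real d * (1 / p - 1 / q); p' = conj_exp p; q' = conj_exp q in
     1 / (2 * pi) powr \<alpha> * (Gamma ((real d - \<alpha>) / 2) / Gamma (\<alpha> / 2)) * (real d / \<alpha>)
     * (sphere_area d / real d) powr (1 - \<alpha> / real d)
     * (1 - \<alpha> / real d) powr (1 - \<alpha> / real d)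
     * (1 / (p * q')) * (p' powr (1 / p' + 1 / q) + q powr (1 / p' + 1 / q)))"

definition S_pq :: "real \<Rightarrow> real \<Rightarrow> real" where
  "S_pq p q = min (q powr (1 / conj_exp p) / (p - 1))
                  (conj_exp p powr (1 / q) / (conj_exp q - 1))"

end

theory Submission
  imports Defs
begin
lemma Gamma_bounds:
  fixes D :: real assumes "D \<ge> 0"
  shows "\<exists>m M. 0 < m \<and> (\<forall>x\<in>{0..D}. m \<le> Gamma (x+1) \<and> Gamma (x+1) \<le> M)"
proof -
  have c: "continuous_on {1..D+1} (Gamma :: real \<Rightarrow> real)"
  proof (rule continuous_on_Gamma)
    show "{1..D+1} \<inter> \<int>\<^sub>\<le>\<^sub>0 = ({} :: real set)"
      by (auto elim!: nonpos_Ints_cases)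
  qed
  have ne: "{1..D+1} \<noteq> ({}::real set)" using assms by auto
  obtain a where a: "a \<in> {1..D+1}" "\<forall>y\<in>{1..D+1}. Gamma a \<le> Gamma y"
    using continuous_attains_inf[OF compact_Icc ne c] by blast
  obtain b where b: "b \<in> {1..D+1}" "\<forall>y\<in>{1..D+1}. Gamma y \<le> Gamma b"
    using continuous_attains_sup[OF compact_Icc ne c] by blast
  have "Gamma a > 0" using a(1) by auto
  moreover have "\<forall>x\<in>{0..D}. Gamma a \<le> Gamma (x+1) \<and> Gamma (x+1) \<le> Gamma b"
    using a(2) b(2) by auto
  ultimately show ?thesis by blast
qed

lemma L1:
  fixes x :: real assumes "0 < x" "x \<le> 1"
  shows "1 \<le> (1/x) powr x" "(1/x) powr x \<le> exp 1"
proof -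
  show "1 \<le> (1/x) powr x" using assms by (simp add: ge_one_powr_ge_zero)
  have "ln (1/x) \<le> 1/x - 1" using assms by (intro ln_le_minus_one) auto
  hence "x * ln (1/x) \<le> x * (1/x - 1)" using assms by (intro mult_left_mono) auto
  also have "\<dots> \<le> 1" using assms by (simp add: field_simps)
  finally have "x * ln (1/x) \<le> 1" .
  thus "(1/x) powr x \<le> exp 1" using assms by (simp add: powr_def)
qed

lemma L2:
  fixes u v :: real assumes "0 < u" "u \<le> 1" "0 < v" "v \<le> 1"
  shows "u * (1/u) powr v \<le> exp 1 * (u + v)"
proof (cases "v \<le> u")
  case True
  have "(1/u) powr v \<le> (1/v) powr v" using assms True
    by (intro powr_mono2) (auto simp: divide_simps)
  also have "\<dots> \<le> exp 1" using L1 assms by auto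
  finally have "u * (1/u) powr v \<le> u * exp 1" using assms by (intro mult_left_mono) auto
  moreover have "u * exp 1 \<le> exp 1 * (u + v)" using assms by simp
  ultimately show ?thesis by linarith
next
  case False
  have e1: "u * (1/u) powr v = u powr (1 - v)" using assms
    by (simp add: powr_diff powr_divide)
  have e2: "v * (1/v) powr v = v powr (1 - v)" using assms
    by (simp add: powr_diff powr_divide)
  have "u powr (1 - v) \<le> v powr (1 - v)" using assms False by (intro powr_mono2) auto
  also have "\<dots> = v * (1/v) powr v" using e2 by simp
  also have "\<dots> \<le> v * exp 1" using L1[of v] assms by (intro mult_left_mono) auto
  also have "\<dots> \<le> exp 1 * (u + v)" using assms by simp
  finally show ?thesis using e1 by simp
qed
lemma TS_upper_aux:
  fixes u v Y :: real assumes "0 < u" "0 < v" "u + v \<le> 1" "v \<le> u" "Y \<ge> 0" "B \<ge> 1" "X \<ge> 0" "A \<ge> 0"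
  shows "Y * (1-u) / u \<le> 4 * ((A * X + B * Y) * (1-u) * (1-v) / (u+v))"
proof -
  have v2: "1/2 \<le> 1 - v" using assms by linarith
  have "(1/2)*(4*u) \<le> (1-v)*(4*u)" using v2 assms by (intro mult_right_mono) auto
  hence "u + v \<le> (1-v)*(4*u)" using assms by linarith
  hence h: "1 / (4*u) \<le> (1-v)/(u+v)" using assms by (simp add: divide_simps)
  have "Y * (1-u) / u = 4 * (Y * (1-u) * (1/(4*u)))" by simp
  also have "\<dots> \<le> 4 * (Y * (1-u) * ((1-v)/(u+v)))"
    using h assms by (intro mult_left_mono) auto
  also have "\<dots> \<le> 4 * ((A * X + B * Y) * (1-u) * (1-v) / (u+v))"
  proof -
    have "1 * Y \<le> B * Y" using assms by (intro mult_right_mono) auto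
    moreover have "0 \<le> A * X" using assms by simp
    ultimately have "Y \<le> A * X + B * Y" by linarith
    hence "Y * ((1-u) * ((1-v)/(u+v))) \<le> (A * X + B * Y) * ((1-u) * ((1-v)/(u+v)))"
      using assms by (intro mult_right_mono) auto
    thus ?thesis by (simp add: mult.assoc)
  qed
  finally show ?thesis .
qed

lemma TS_lower_aux:
  fixes u v :: real assumes "0 < u" "0 < v" "u + v \<le> 1"
    and A: "0 \<le> A" "A \<le> exp 1" and B: "0 \<le> B" "B \<le> exp 1"
    and X: "X \<ge> 0" "u * X \<le> exp 1 * (u + v)" and Y: "Y \<ge> 1"
  shows "(A * X + B * Y) * (1-u) * (1-v) / (u+v) \<le> exp 1 * (1 + exp 1) * (Y * (1-u) / u)"
proof -
  have u1: "0 \<le> 1 - u" "1 - u \<le> 1" "0 \<le> 1 - v" "1 - v \<le> 1" using assms by auto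
  have "(A * X + B * Y) * (1-u) * (1-v) / (u+v) \<le> (exp 1 * X + exp 1 * Y) * (1-u) / (u+v)"
  proof -
    have "A * X + B * Y \<le> exp 1 * X + exp 1 * Y" using A B X Y
      by (intro add_mono mult_right_mono) auto
    moreover have "(A * X + B * Y) * (1-v) \<le> A * X + B * Y"
      using A B X Y u1 by (intro mult_left_le) auto
    ultimately have "(A * X + B * Y) * (1-v) \<le> exp 1 * X + exp 1 * Y" by linarith
    hence "(A * X + B * Y) * (1-v) * (1-u) \<le> (exp 1 * X + exp 1 * Y) * (1-u)"
      using u1 by (intro mult_right_mono) auto
    thus ?thesis using assms by (intro divide_right_mono) (auto simp: ac_simps)
  qed
  also have "\<dots> = exp 1 * (1-u) * (X / (u+v)) + exp 1 * (1-u) * (Y / (u+v))"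
    by (simp add: divide_inverse algebra_simps)
  also have "\<dots> \<le> exp 1 * (1-u) * (exp 1 * Y / u) + exp 1 * (1-u) * (Y / u)"
  proof (intro add_mono mult_left_mono)
    have "X / (u+v) \<le> exp 1 / u" using X assms by (simp add: divide_simps ac_simps)
    also have "\<dots> \<le> exp 1 * Y / u" using Y assms by (simp add: divide_simps)
    finally show "X / (u+v) \<le> exp 1 * Y / u" .
    show "Y / (u+v) \<le> Y / u" using Y assms by (intro divide_left_mono) auto
  qed (use u1 in auto)
  also have "\<dots> = exp 1 * (1 + exp 1) * (Y * (1-u) / u)" by (simp add: divide_inverse algebra_simps)
  finally show ?thesis .
qed

lemma TS:
  fixes u v :: real assumes "0 < u" "0 < v" "u + v \<le> 1"
  shows "min ((1/v) powr u * (1-u)/u) ((1/u) powr v * (1-v)/v)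
           \<le> 4 * (((1/u) powr (u+v) + (1/v) powr (u+v)) * (1-u) * (1-v) / (u+v))"
    and "((1/u) powr (u+v) + (1/v) powr (u+v)) * (1-u) * (1-v) / (u+v)
           \<le> exp 1 * (1 + exp 1) * min ((1/v) powr u * (1-u)/u) ((1/u) powr v * (1-v)/v)"
proof -
  define A where "A = (1/u) powr u"
  define X where "X = (1/u) powr v"
  define B where "B = (1/v) powr v"
  define Y where "Y = (1/v) powr u"
  have u1: "u \<le> 1" "v \<le> 1" using assms by auto
  have eA: "(1/u) powr (u+v) = A * X" unfolding A_def X_def by (simp add: powr_add)
  have eB: "(1/v) powr (u+v) = B * Y" unfolding B_def Y_def by (simp add: powr_add mult.commute)
  have A: "1 \<le> A" "A \<le> exp 1" unfolding A_def using L1[of u] assms u1 by auto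
  have B: "1 \<le> B" "B \<le> exp 1" unfolding B_def using L1[of v] assms u1 by auto
  have X: "1 \<le> X" unfolding X_def using assms u1 by (intro ge_one_powr_ge_zero) auto
  have Y: "1 \<le> Y" unfolding Y_def using assms u1 by (intro ge_one_powr_ge_zero) auto
  have X2: "u * X \<le> exp 1 * (u + v)" unfolding X_def using L2[of u v] assms u1 by auto
  have Y2: "v * Y \<le> exp 1 * (v + u)" unfolding Y_def using L2[of v u] assms u1 by auto
  have sym: "(B * Y + A * X) * (1-v) * (1-u) / (v+u) = (A * X + B * Y) * (1-u) * (1-v) / (u+v)"
    by (simp add: ac_simps)
  have up: "min (Y * (1-u)/u) (X * (1-v)/v) \<le> 4 * ((A * X + B * Y) * (1-u) * (1-v) / (u+v))"
  proof (cases "v \<le> u")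
    case True
    have "Y * (1-u) / u \<le> 4 * ((A * X + B * Y) * (1-u) * (1-v) / (u+v))"
      using TS_upper_aux[of u v Y B X A] True assms A B X Y by auto
    thus ?thesis by linarith
  next
    case False
    have "X * (1-v) / v \<le> 4 * ((B * Y + A * X) * (1-v) * (1-u) / (v+u))"
      using TS_upper_aux[of v u X A Y B] False assms A B X Y by auto
    thus ?thesis unfolding sym by linarith
  qed
  then show "min ((1/v) powr u * (1-u)/u) ((1/u) powr v * (1-v)/v)
           \<le> 4 * (((1/u) powr (u+v) + (1/v) powr (u+v)) * (1-u) * (1-v) / (u+v))"
    unfolding eA eB X_def Y_def .
  have 1: "(A * X + B * Y) * (1-u) * (1-v) / (u+v) \<le> exp 1 * (1 + exp 1) * (Y * (1-u) / u)"
    using TS_lower_aux[of u v A B X Y] assms A B X Y X2 by auto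
  have 2: "(B * Y + A * X) * (1-v) * (1-u) / (v+u) \<le> exp 1 * (1 + exp 1) * (X * (1-v) / v)"
    using TS_lower_aux[of v u B A Y X] assms A B X Y Y2 by auto
  have "(A * X + B * Y) * (1-u) * (1-v) / (u+v)
           \<le> exp 1 * (1 + exp 1) * min (Y * (1-u)/u) (X * (1-v)/v)"
    using 1 2 unfolding sym unfolding min_def by auto
  then show "((1/u) powr (u+v) + (1/v) powr (u+v)) * (1-u) * (1-v) / (u+v)
           \<le> exp 1 * (1 + exp 1) * min ((1/v) powr u * (1-u)/u) ((1/u) powr v * (1-v)/v)"
    unfolding eA eB X_def Y_def .
qed

lemma powr_between:
  fixes A s :: real assumes "0 < A" "0 < s" "s \<le> 1"
  shows "min 1 A \<le> A powr s" "A powr s \<le> max 1 A"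
proof -
  show "min 1 A \<le> A powr s"
  proof (cases "1 \<le> A")
    case True thus ?thesis using ge_one_powr_ge_zero[of A s] assms by auto
  next
    case False
    hence "A powr 1 \<le> A powr s" using assms by (intro powr_mono') auto
    thus ?thesis using assms by auto
  qed
  show "A powr s \<le> max 1 A"
  proof (cases "1 \<le> A")
    case True
    hence "A powr s \<le> A powr 1" using assms by (intro powr_mono) auto
    thus ?thesis using assms by auto
  next
    case False thus ?thesis using powr_le1[of s A] assms by auto
  qed
qed

lemma spow_bounds:
  fixes s :: real assumes "0 < s" "s \<le> 1"
  shows "exp (-1) \<le> s powr s" "s powr s \<le> 1"
proof -
  have "(1/s) powr s \<le> exp 1" using L1 assms by auto
  moreover have "(1/s) powr s = 1 / s powr s" using assms by (simp add: powr_divide)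
  moreover have "s powr s > 0" using assms by simp
  ultimately have "1 \<le> exp 1 * s powr s" by (simp add: divide_simps)
  thus "exp (-1) \<le> s powr s" by (simp add: exp_minus divide_simps mult.commute)
  show "s powr s \<le> 1" using powr_le1[of s s] assms by auto
qed

definition Kf :: "nat \<Rightarrow> real \<Rightarrow> real" where
  "Kf d \<alpha> = 1 / (2 * pi) powr \<alpha> * (Gamma ((real d - \<alpha>) / 2 + 1) / Gamma (\<alpha> / 2 + 1))
     * (sphere_area d / real d) powr (1 - \<alpha> / real d)
     * (1 - \<alpha> / real d) powr (1 - \<alpha> / real d)"

lemma alg:
  fixes a d s f1 H Ap sp w P :: real
  assumes "a \<noteq> 0" "d \<noteq> 0" "s \<noteq> 0"
  shows "f1 * (H / s * (a / d)) * (d / a) * Ap * sp * w * P = f1 * H * Ap * sp * (P * w / s)"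
  using assms by (simp add: field_simps)

lemma alg2:
  fixes d a G1 G2 :: real
  assumes "0 < a" "a < d" "0 < G1" "0 < G2"
  shows "G1 / G2 = (d - a) / 2 * G1 / (a / 2 * G2) / ((d - a) / d) * (a / d)"
  using assms by (simp add: field_simps)

lemma E_eq:
  fixes p q \<alpha> :: real and d :: nat
  assumes d: "d \<ge> 1" and p: "1 < p" and a: "0 < \<alpha>" "\<alpha> < real d / p" and pq: "p \<le> q"
    and h: "1 / q = 1 / p - \<alpha> / real d"
  shows "E_H_tilde p q d = Kf d \<alpha> *
     (((1/(1-1/p)) powr ((1-1/p)+1/q) + (1/(1/q)) powr ((1-1/p)+1/q)) * (1-(1-1/p)) * (1-1/q) / ((1-1/p)+1/q))"
proof -
  define u where "u = 1 - 1/p"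
  define v where "v = 1/q"
  have dpos: "real d > 0" using d by simp
  have q1: "q > 1" using p pq by simp
  have u0: "0 < u" "u < 1" unfolding u_def using p by (auto simp: field_simps)
  have v0: "0 < v" "v < 1" unfolding v_def using q1 by (auto simp: field_simps)
  have ad: "\<alpha> < real d" using a p dpos
  proof -
    have "real d / p \<le> real d" using p dpos by (simp add: divide_le_eq)
    thus ?thesis using a by linarith
  qed
  have a1: "real d * (1/p - 1/q) = \<alpha>" using h dpos by (simp add: field_simps)
  have a3: "1 - \<alpha> / real d = u + v" unfolding u_def v_def using h dpos by (simp add: field_simps)
  have a2: "1 / conj_exp p + 1 / q = u + v" unfolding u_def v_def conj_exp_def using p
    by (simp add: field_simps)
  have a4: "conj_exp p = 1/u" unfolding u_def conj_exp_def using p by (simp add: field_simps)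
  have a5: "q = 1/v" unfolding v_def using q1 by simp
  have a6: "1 / (p * conj_exp q) = (1-u) * (1-v)" unfolding u_def v_def conj_exp_def using p q1
    by (simp add: field_simps)
  have x1: "(real d - \<alpha>)/2 > 0" using ad by simp
  have x2: "\<alpha>/2 > 0" using a by simp
  have G1: "Gamma ((real d - \<alpha>)/2 + 1) = (real d - \<alpha>)/2 * Gamma ((real d - \<alpha>)/2)"
    using x1 by (intro Gamma_plus1) (auto dest: nonpos_Ints_nonpos)
  have G2: "Gamma (\<alpha>/2 + 1) = \<alpha>/2 * Gamma (\<alpha>/2)"
    using x2 by (intro Gamma_plus1) (auto dest: nonpos_Ints_nonpos)
  have gp: "Gamma ((real d - \<alpha>)/2) > 0" "Gamma (\<alpha>/2) > 0" using x1 x2 by auto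
  have uv: "u + v = (real d - \<alpha>) / real d" using a3 dpos by (simp add: field_simps)
  have g': "Gamma ((real d - \<alpha>)/2) / Gamma (\<alpha>/2)
      = Gamma ((real d - \<alpha>)/2 + 1) / Gamma (\<alpha>/2 + 1) / (u + v) * (\<alpha> / real d)"
    unfolding G1 G2 uv using alg2[of "real d" \<alpha>] gp a ad dpos by simp
  define H where "H = Gamma ((real d - \<alpha>)/2 + 1) / Gamma (\<alpha>/2 + 1)"
  define P where "P = (1/u) powr (u+v) + (1/v) powr (u+v)"
  have "E_H_tilde p q d = 1 / (2 * pi) powr \<alpha> * (Gamma ((real d - \<alpha>) / 2) / Gamma (\<alpha> / 2))
     * (real d / \<alpha>) * (sphere_area d / real d) powr (1 - \<alpha> / real d)
     * (1 - \<alpha> / real d) powr (1 - \<alpha> / real d)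
     * (1 / (p * conj_exp q)) * (conj_exp p powr (1 / conj_exp p + 1 / q) + q powr (1 / conj_exp p + 1 / q))"
    unfolding E_H_tilde_def Let_def a1 ..
  also have "\<dots> = 1 / (2 * pi) powr \<alpha> * (H / (u + v) * (\<alpha> / real d))
     * (real d / \<alpha>) * (sphere_area d / real d) powr (u + v)
     * (u + v) powr (u + v) * ((1-u) * (1-v)) * P"
    unfolding g' a2 a3 a6 unfolding H_def P_def a4 by (simp only: a5)
  also have "\<dots> = Kf d \<alpha> * (P * (1-u) * (1-v) / (u+v))"
    unfolding Kf_def a3 H_def[symmetric] using alg[of \<alpha> "real d" "u+v"] a dpos u0 v0 by simp
  finally show ?thesis unfolding P_def u_def v_def .
qed


lemma S_eq:
  fixes p q :: real
  assumes p: "1 < p" and pq: "p \<le> q"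
  shows "S_pq p q = min ((1/(1/q)) powr (1-1/p) * (1-(1-1/p))/(1-1/p)) ((1/(1-1/p)) powr (1/q) * (1-1/q)/(1/q))"
proof -
  have q1: "q > 1" using p pq by simp
  have e1: "1 / conj_exp p = 1 - 1/p" unfolding conj_exp_def using p by (simp add: field_simps)
  have e2: "1 / (p - 1) = (1-(1-1/p))/(1-1/p)" using p by (simp add: field_simps)
  have e3: "conj_exp p = 1/(1-1/p)" unfolding conj_exp_def using p by (simp add: field_simps)
  have e4: "1 / (conj_exp q - 1) = (1-1/q)/(1/q)" unfolding conj_exp_def using q1 by (simp add: field_simps)
  have "S_pq p q = min (q powr (1 / conj_exp p) * (1 / (p - 1))) (conj_exp p powr (1 / q) * (1 / (conj_exp q - 1)))"
    unfolding S_pq_def by simp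
  also have "\<dots> = min (q powr (1-1/p) * ((1-(1-1/p))/(1-1/p))) ((1/(1-1/p)) powr (1 / q) * ((1-1/q)/(1/q)))"
    unfolding e1 e2 e4 unfolding e3 ..
  also have "\<dots> = min ((1/(1/q)) powr (1-1/p) * (1-(1-1/p))/(1-1/p)) ((1/(1-1/p)) powr (1/q) * (1-1/q)/(1/q))"
    using q1 by simp
  finally show ?thesis .
qed

lemma prod4:
  fixes a1 a a2 b1 b b2 c1 c c2 e1 e e2 :: real
  assumes "0 \<le> a1" "a1 \<le> a" "a \<le> a2" "0 \<le> b1" "b1 \<le> b" "b \<le> b2"
    "0 \<le> c1" "c1 \<le> c" "c \<le> c2" "0 \<le> e1" "e1 \<le> e" "e \<le> e2"
  shows "a1 * b1 * c1 * e1 \<le> a * b * c * e" "a * b * c * e \<le> a2 * b2 * c2 * e2"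
proof -
  have "a1 * b1 \<le> a * b" using assms by (intro mult_mono) auto
  moreover have "a1 * b1 * c1 \<le> a * b * c" using assms calculation by (intro mult_mono) auto
  ultimately show "a1 * b1 * c1 * e1 \<le> a * b * c * e" using assms by (intro mult_mono) auto
  have "a * b \<le> a2 * b2" using assms by (intro mult_mono) auto
  moreover have "a * b * c \<le> a2 * b2 * c2" using assms calculation by (intro mult_mono) auto
  ultimately show "a * b * c * e \<le> a2 * b2 * c2 * e2" using assms by (intro mult_mono) (auto)
qed

lemma K_bounds:
  fixes d :: nat assumes d: "d \<ge> 1"
  shows "\<exists>k1 k2. 0 < k1 \<and> (\<forall>\<alpha>. 0 < \<alpha> \<and> \<alpha> < real d \<longrightarrow> k1 \<le> Kf d \<alpha> \<and> Kf d \<alpha> \<le> k2)"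
proof -
  have dpos: "real d > 0" using d by simp
  obtain m M where mM: "0 < m" "\<forall>x\<in>{0..real d/2}. m \<le> Gamma (x+1) \<and> Gamma (x+1) \<le> M"
    using Gamma_bounds[of "real d / 2"] by auto
  define A where "A = sphere_area d / real d"
  have Apos: "A > 0" unfolding A_def sphere_area_def using dpos by simp
  have Mpos: "M > 0" using mM by (metis atLeastAtMost_iff divide_nonneg_nonneg le_less_trans
      less_eq_real_def of_nat_0_le_iff order.refl zero_le_numeral)
  define k1 where "k1 = 1 / (2*pi) powr real d * (m / M) * min 1 A * exp (-1)"
  define k2 where "k2 = 1 * (M / m) * max 1 A * 1"
  have "0 < k1" unfolding k1_def using mM Mpos Apos by simp
  moreover have "k1 \<le> Kf d \<alpha> \<and> Kf d \<alpha> \<le> k2" if "0 < \<alpha>" "\<alpha> < real d" for \<alpha>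
  proof -
    define s where "s = 1 - \<alpha> / real d"
    have s: "0 < s" "s \<le> 1" unfolding s_def using that dpos by (auto simp: field_simps)
    have x1: "(real d - \<alpha>)/2 \<in> {0..real d/2}" "\<alpha>/2 \<in> {0..real d/2}" using that by auto
    have g1: "m \<le> Gamma ((real d - \<alpha>)/2 + 1)" "Gamma ((real d - \<alpha>)/2 + 1) \<le> M"
      using mM(2) x1(1) by auto
    have g2: "m \<le> Gamma (\<alpha>/2 + 1)" "Gamma (\<alpha>/2 + 1) \<le> M"
      using mM(2) x1(2) by auto
    have r1: "m / M \<le> Gamma ((real d - \<alpha>)/2 + 1) / Gamma (\<alpha>/2 + 1)"
      using g1 g2 mM(1) by (intro frac_le) auto
    have r2: "Gamma ((real d - \<alpha>)/2 + 1) / Gamma (\<alpha>/2 + 1) \<le> M / m"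
      using g1 g2 mM(1) by (intro frac_le) auto
    have pi1: "1 \<le> 2*pi" using pi_gt3 by linarith
    have p1: "(2*pi) powr \<alpha> \<le> (2*pi) powr real d" using that pi1 by (intro powr_mono) auto
    have p2: "1 \<le> (2*pi) powr \<alpha>" using that pi1 by (intro ge_one_powr_ge_zero) auto
    have f1: "1 / (2*pi) powr real d \<le> 1 / (2*pi) powr \<alpha>" using p1 p2
      by (intro divide_left_mono) auto
    have f1': "1 / (2*pi) powr \<alpha> \<le> 1" using p2 by simp
    have K: "Kf d \<alpha> = 1 / (2*pi) powr \<alpha> * (Gamma ((real d - \<alpha>)/2 + 1) / Gamma (\<alpha>/2 + 1))
        * A powr s * s powr s" unfolding Kf_def A_def s_def by simp
    show ?thesis unfolding K k1_def k2_def
      using prod4[OF _ f1 f1' _ r1 r2 _ powr_between(1)[OF Apos s] powr_between(2)[OF Apos s]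
          _ spow_bounds(1)[OF s] spow_bounds(2)[OF s]] mM(1) Mpos Apos by auto
  qed
  ultimately show ?thesis by blast
qed


theorem theorem4p2:
  fixes d :: nat
  assumes "d \<ge> 1"
  shows "\<exists>B3 > 0. \<forall>p \<alpha> q :: real.
           1 < p \<and> 0 < \<alpha> \<and> \<alpha> < real d / p \<and> p \<le> q \<and> 1 / q = 1 / p - \<alpha> / real d \<longrightarrow>
           S_pq p q / B3 \<le> E_H_tilde p q d \<and> E_H_tilde p q d \<le> B3 * S_pq p q"
proof -
  obtain k1 k2 where k: "0 < k1" "\<And>\<alpha>. 0 < \<alpha> \<Longrightarrow> \<alpha> < real d \<Longrightarrow> k1 \<le> Kf d \<alpha> \<and> Kf d \<alpha> \<le> k2"
    using K_bounds[OF assms] by blast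
  define c :: real where "c = exp 1 * (1 + exp 1)"
  have cpos: "c > 0" unfolding c_def by (simp add: add_pos_pos)
  define B3 where "B3 = max (4 / k1) (max 1 k2 * c)"
  have "4 / k1 \<le> B3" unfolding B3_def by simp
  moreover have "0 < 4 / k1" using k(1) by simp
  ultimately have B3pos: "B3 > 0" by linarith
  have "S_pq p q / B3 \<le> E_H_tilde p q d \<and> E_H_tilde p q d \<le> B3 * S_pq p q"
    if h: "1 < p" "0 < \<alpha>" "\<alpha> < real d / p" "p \<le> q" "1 / q = 1 / p - \<alpha> / real d" for p \<alpha> q
  proof -
    have dpos: "real d > 0" using assms by simp
    have ad: "\<alpha> < real d"
    proof -
      have "real d / p \<le> real d" using h(1) dpos by (simp add: divide_le_eq)
      thus ?thesis using h(3) by linarith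
    qed
    have q1: "q > 1" using h by simp
    define u where "u = 1 - 1/p"
    define v where "v = 1/q"
    have u0: "0 < u" unfolding u_def using h(1) by (simp add: field_simps)
    have v0: "0 < v" unfolding v_def using q1 by simp
    have uv: "u + v \<le> 1" unfolding u_def v_def using h(1,4) q1
      by (simp add: field_simps)
    define T where "T = ((1/u) powr (u+v) + (1/v) powr (u+v)) * (1-u) * (1-v) / (u+v)"
    define S where "S = min ((1/v) powr u * (1-u)/u) ((1/u) powr v * (1-v)/v)"
    have E: "E_H_tilde p q d = Kf d \<alpha> * T"
      unfolding T_def u_def v_def using E_eq[OF assms h(1,2,3,4,5)] .
    have Seq: "S_pq p q = S" unfolding S_def u_def v_def using S_eq[OF h(1,4)] .
    have TS1: "S \<le> 4 * T" unfolding S_def T_def using TS(1)[OF u0 v0 uv] .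
    have TS2: "T \<le> c * S" unfolding S_def T_def c_def using TS(2)[OF u0 v0 uv] .
    have Tpos: "T > 0" unfolding T_def using u0 v0 uv
      by (intro divide_pos_pos mult_pos_pos add_pos_pos) auto
    have "0 < c * S" using TS2 Tpos by linarith
    hence Spos: "S \<ge> 0" using cpos by (simp add: zero_less_mult_iff)
    have K: "k1 \<le> Kf d \<alpha>" "Kf d \<alpha> \<le> k2" using k(2)[OF h(2) ad] by auto
    have Kpos: "Kf d \<alpha> > 0" using K k(1) by linarith
    have Epos: "E_H_tilde p q d \<ge> 0" unfolding E using Kpos Tpos by simp
    have up: "E_H_tilde p q d \<le> B3 * S"
    proof -
      have "Kf d \<alpha> * T \<le> max 1 k2 * T" using K Tpos by (intro mult_right_mono) auto
      also have "\<dots> \<le> max 1 k2 * (c * S)" using TS2 by (intro mult_left_mono) auto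
      also have "\<dots> = (max 1 k2 * c) * S" by simp
      also have "\<dots> \<le> B3 * S" unfolding B3_def using Spos by (intro mult_right_mono) auto
      finally show ?thesis unfolding E .
    qed
    have lo: "S \<le> B3 * E_H_tilde p q d"
    proof -
      have "k1 * T \<le> Kf d \<alpha> * T" using K Tpos by (intro mult_right_mono) auto
      hence "T \<le> E_H_tilde p q d / k1" unfolding E using k(1) by (simp add: field_simps)
      hence "S \<le> 4 * (E_H_tilde p q d / k1)" using TS1 by linarith
      also have "\<dots> = (4 / k1) * E_H_tilde p q d" by simp
      also have "\<dots> \<le> B3 * E_H_tilde p q d" unfolding B3_def using Epos
        by (intro mult_right_mono) auto
      finally show ?thesis .
    qed
    show ?thesis unfolding Seq using up lo B3pos by (simp add: divide_le_eq mult.commute)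
  qed
  thus ?thesis using B3pos by blast
qed

end
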